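(* Let $\mathbb{F}_q$ be a finite field, $n\ge1$, and let $C\le \mathbb{F}_q^n$ be a linear code which is an abelian group code. Let $G$ be a regular subgroup of $S_n$ such that $\langle G, C_{S_n}(G)\rangle \le \mathrm{PAut}(C)$, and such that $C$ is permutation equivalent to some ideal of the group algebra $\mathbb{F}_q[G]$ on which the derived subgroup $G'$ acts trivially from the left (respectively, from the right). If $G'\neq\{1\}$, then there exist positive integers $s,t>1$ with $s\cdot t=n$ such that $C$ is permutation equivalent to a linear subspace of $\bigoplus_{i=1}^{s}\mathrm{Rep}_t(\mathbb{F}_q)\le\mathbb{F}_q^{st}$.
   Context: All groups are finite. $\mathcal{B}=\{e_1,\dots,e_n\}$ is the standard basis of $\mathbb{F}_q^n$. A permutation $\sigma\in S_n$ acts on $\mathbb{F}_q^n$ by $\sigma(\sum a_ie_i)=\sum a_i e_{\sigma(i)}$; two codes $C,C'\le\mathbb{F}_q^n$ are permutation equivalent if $\sigma(C)=C'$ for some $\sigma\in S_n$; $\mathrm{PAut}(C)=\{\sigma\in S_n:\sigma(C)=C\}$. A subgroup of $S_n$ is regular if it has order $n$ and acts transitively on $\{1,\dots,n\}$; $C_{S_n}(G)$ is the centralizer of $G$ in $S_n$. For a group $H$ of order $n$, $C$ is an $H$-code if there is a bijection $\phi:\mathcal{B}\to H$ whose $\mathbb{F}_q$-linear extension $\tilde\phi:\mathbb{F}_q^n\to\mathbb{F}_q[H]$ maps $C$ onto a two-sided ideal of $\mathbb{F}_q[H]$; $C$ is an abelian group code if it is an $H$-code for some abelian $H$. $C$ is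 permutation equivalent to an ideal $I$ of $\mathbb{F}_q[G]$ if there is a bijection $\phi:\mathcal{B}\to G$ with $\tilde\phi(C)=I$. A subgroup $U\le G$ acts trivially from the left (right) on $X\subseteq\mathbb{F}_q[G]$ if $ux=x$ (resp. $xu=x$) for all $u\in U,x\in X$. $\mathrm{Rep}_t(\mathbb{F}_q)=\{(\lambda,\dots,\lambda):\lambda\in\mathbb{F}_q\}\le\mathbb{F}_q^t$ is the repetition code of length $t$. *)

theory Defs
  imports "HOL-Algebra.Algebra" "HOL-Combinatorics.Permutations"
begin

text \<open>Vectors of F_q^n: functions on indices, zero outside {1..n}.
  The standard basis vector e_i corresponds to index i.\<close>

definition vecs :: "nat \<Rightarrow> (nat \<Rightarrow> 'a::field) set" where
  "vecs n = {v. \<forall>i. i \<notin> {1..n} \<longrightarrow> v i = 0}"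

definition linear_code :: "nat \<Rightarrow> (nat \<Rightarrow> 'a::field) set \<Rightarrow> bool" where
  "linear_code n C \<longleftrightarrow> C \<subseteq> vecs n \<and> (\<lambda>_. 0) \<in> C \<and>
     (\<forall>x\<in>C. \<forall>y\<in>C. (\<lambda>i. x i + y i) \<in> C) \<and>
     (\<forall>c. \<forall>x\<in>C. (\<lambda>i. c * x i) \<in> C)"

text \<open>sigma(sum a_i e_i) = sum a_i e_(sigma i), i.e. (sigma v)(j) = v(sigma^-1 j).\<close>
definition perm_vec :: "(nat \<Rightarrow> nat) \<Rightarrow> (nat \<Rightarrow> 'a) \<Rightarrow> nat \<Rightarrow> 'a" where
  "perm_vec \<sigma> v = (\<lambda>j. v (Hilbert_Choice.inv \<sigma> j))"

definition perm_equiv :: "nat \<Rightarrow> (nat \<Rightarrow> 'a) set \<Rightarrow> (nat \<Rightarrow> 'a) set \<Rightarrow> bool" where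
  "perm_equiv n C D \<longleftrightarrow> (\<exists>\<sigma>. \<sigma> permutes {1..n} \<and> perm_vec \<sigma> ` C = D)"

definition PAut :: "nat \<Rightarrow> (nat \<Rightarrow> 'a) set \<Rightarrow> (nat \<Rightarrow> nat) set" where
  "PAut n C = {\<sigma>. \<sigma> permutes {1..n} \<and> perm_vec \<sigma> ` C = C}"

definition regular_subgroup :: "nat \<Rightarrow> (nat \<Rightarrow> nat) set \<Rightarrow> bool" where
  "regular_subgroup n G \<longleftrightarrow> subgroup G (sym_group n) \<and> card G = n \<and>
     (\<forall>i\<in>{1..n}. \<forall>j\<in>{1..n}. \<exists>g\<in>G. g i = j)"

definition centralizer_Sn :: "nat \<Rightarrow> (nat \<Rightarrow> nat) set \<Rightarrow> (nat \<Rightarrow> nat) set" where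
  "centralizer_Sn n G = {\<sigma> \<in> carrier (sym_group n). \<forall>g\<in>G. \<sigma> \<circ> g = g \<circ> \<sigma>}"

text \<open>Group algebra F_q[H] of a (finite) group H: functions on the carrier
  (zero outside), with convolution product.\<close>
definition ga_elems :: "('g, 'b) monoid_scheme \<Rightarrow> ('g \<Rightarrow> 'a::field) set" where
  "ga_elems H = {x. \<forall>g. g \<notin> carrier H \<longrightarrow> x g = 0}"

definition ga_mult :: "('g, 'b) monoid_scheme \<Rightarrow> ('g \<Rightarrow> 'a::field) \<Rightarrow> ('g \<Rightarrow> 'a) \<Rightarrow> 'g \<Rightarrow> 'a" where
  "ga_mult H x y = (\<lambda>g. if g \<in> carrier H
      then (\<Sum>h\<in>carrier H. x h * y (inv\<^bsub>H\<^esub> h \<otimes>\<^bsub>H\<^esub> g)) else 0)"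

definition ga_basis :: "'g \<Rightarrow> 'g \<Rightarrow> 'a::field" where
  "ga_basis u = (\<lambda>g. if g = u then 1 else 0)"

definition two_sided_ideal :: "('g, 'b) monoid_scheme \<Rightarrow> ('g \<Rightarrow> 'a::field) set \<Rightarrow> bool" where
  "two_sided_ideal H I \<longleftrightarrow> I \<subseteq> ga_elems H \<and> (\<lambda>_. 0) \<in> I \<and>
     (\<forall>x\<in>I. \<forall>y\<in>I. (\<lambda>g. x g + y g) \<in> I) \<and>
     (\<forall>c. \<forall>x\<in>I. (\<lambda>g. c * x g) \<in> I) \<and>
     (\<forall>a\<in>ga_elems H. \<forall>x\<in>I. ga_mult H a x \<in> I \<and> ga_mult H x a \<in> I)"

definition acts_trivially_left :: "('g, 'b) monoid_scheme \<Rightarrow> 'g set \<Rightarrow> ('g \<Rightarrow> 'a::field) set \<Rightarrow> bool" where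
  "acts_trivially_left H U S \<longleftrightarrow> (\<forall>u\<in>U. \<forall>x\<in>S. ga_mult H (ga_basis u) x = x)"

definition acts_trivially_right :: "('g, 'b) monoid_scheme \<Rightarrow> 'g set \<Rightarrow> ('g \<Rightarrow> 'a::field) set \<Rightarrow> bool" where
  "acts_trivially_right H U S \<longleftrightarrow> (\<forall>u\<in>U. \<forall>x\<in>S. ga_mult H x (ga_basis u) = x)"

text \<open>Linear extension of a bijection phi : {e_1..e_n} -> H (e_i identified with i).\<close>
definition lift_map :: "nat \<Rightarrow> ('g, 'b) monoid_scheme \<Rightarrow> (nat \<Rightarrow> 'g) \<Rightarrow> (nat \<Rightarrow> 'a::field) \<Rightarrow> 'g \<Rightarrow> 'a" where
  "lift_map n H \<phi> v = (\<lambda>g. if g \<in> carrier H then v (inv_into {1..n} \<phi> g) else 0)"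

definition perm_equiv_ideal :: "nat \<Rightarrow> (nat \<Rightarrow> 'a::field) set \<Rightarrow> ('g, 'b) monoid_scheme \<Rightarrow> ('g \<Rightarrow> 'a) set \<Rightarrow> bool" where
  "perm_equiv_ideal n C H I \<longleftrightarrow>
     (\<exists>\<phi>. bij_betw \<phi> {1..n} (carrier H) \<and> lift_map n H \<phi> ` C = I)"

definition is_group_code :: "nat \<Rightarrow> ('g, 'b) monoid_scheme \<Rightarrow> (nat \<Rightarrow> 'a::field) set \<Rightarrow> bool" where
  "is_group_code n H C \<longleftrightarrow> card (carrier H) = n \<and>
     (\<exists>I. two_sided_ideal H I \<and> perm_equiv_ideal n C H I)"

text \<open>Abelian group code: an H-code for some finite abelian group H (up to isomorphism
  every group of order n has carrier inside nat, so it suffices to range over nat groups).\<close>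
definition abelian_group_code :: "nat \<Rightarrow> (nat \<Rightarrow> 'a::field) set \<Rightarrow> bool" where
  "abelian_group_code n C \<longleftrightarrow> (\<exists>H :: nat monoid. comm_group H \<and> is_group_code n H C)"

text \<open>Direct sum of s copies of Rep_t inside F^(st): constant on consecutive blocks.\<close>
definition rep_sum :: "nat \<Rightarrow> nat \<Rightarrow> (nat \<Rightarrow> 'a::field) set" where
  "rep_sum s t = {v \<in> vecs (s * t). \<forall>i<s. \<forall>j\<in>{1..t}. \<forall>k\<in>{1..t}. v (i * t + j) = v (i * t + k)}"

end

theory Submission
  imports Defs
begin


lemma a1: fixes i j t :: nat assumes "j \<in> {1..t}" "t > 0" shows "(i * t + j - 1) div t = i"
proof -
  have e: "i * t + j - 1 = (j - 1) + t * i" using assms by (auto simp: mult.commute)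
  have lt: "j - 1 < t" using assms by auto
  have "((j - 1) + t * i) div t = (j - 1) div t + i" using assms(2) by (simp only: div_mult_self2)
  also have "\<dots> = i" using lt by simp
  finally show ?thesis using e by simp
qed
lemma a1m: fixes i j t :: nat assumes "j \<in> {1..t}" "t > 0" shows "(i * t + j - 1) mod t = j - 1"
proof -
  have e: "i * t + j - 1 = (j - 1) + t * i" using assms by (auto simp: mult.commute)
  have lt: "j - 1 < t" using assms by auto
  have "((j - 1) + t * i) mod t = (j - 1) mod t" by (simp only: mod_mult_self2)
  also have "\<dots> = j - 1" using lt by simp
  finally show ?thesis using e by simp
qed
lemma a2: fixes i j t s n :: nat assumes "j \<in> {1..t}" "i < s" "s * t = n" shows "i * t + j \<in> {1..n}"
proof -
  have "i * t + j \<le> (s - 1) * t + t" using assms by (intro add_mono mult_le_mono1) auto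
  also have "\<dots> = s * t" using assms(2) by (cases s) auto
  finally show ?thesis using assms by (auto simp: mult.commute)
qed

lemma core:
  fixes phi :: "nat \<Rightarrow> 'g" and n t :: nat and C :: "(nat \<Rightarrow> 'a::field) set"
  assumes bij: "bij_betw phi {1..n} GG" and fin: "finite GG"
    and part: "\<Union>P = GG" and disj: "pairwise disjnt P"
    and cardc: "\<forall>c\<in>P. card c = t" and st: "card P * t = n" and tpos: "t > 0"
    and lin: "linear_code n C"
    and const: "\<forall>v\<in>C. \<forall>c\<in>P. \<forall>g\<in>c. \<forall>g'\<in>c.
          v (inv_into {1..n} phi g) = v (inv_into {1..n} phi g')"
  shows "\<exists>D. linear_code n D \<and> D \<subseteq> rep_sum (card P) t \<and> perm_equiv n C D"
proof -
  define s where "s = card P"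
  have finP: "finite P" using fin part by (metis finite_UnionD)
  obtain e where e: "bij_betw e {0..<s} P" using ex_bij_betw_nat_finite[OF finP] s_def by blast
  have "\<forall>c\<in>P. \<exists>f. bij_betw f {0..<t} c"
  proof
    fix c assume "c \<in> P"
    then have "finite c" "card c = t" using fin part cardc by (auto intro: finite_subset)
    then show "\<exists>f. bij_betw f {0..<t} c" using ex_bij_betw_nat_finite by metis
  qed
  then obtain f where f: "\<And>c. c \<in> P \<Longrightarrow> bij_betw (f c) {0..<t} c" by metis
  define psi where "psi m = f (e ((m - 1) div t)) ((m - 1) mod t)" for m
  have divlt: "(m - 1) div t < s" if "m \<in> {1..n}" for m
    using that st tpos s_def by (auto simp: less_mult_imp_div_less)
  have psi_in: "psi m \<in> e ((m - 1) div t)" if "m \<in> {1..n}" for m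
  proof -
    have "e ((m - 1) div t) \<in> P" using e divlt[OF that] by (auto simp: bij_betw_def)
    then show ?thesis unfolding psi_def using f[of "e ((m - 1) div t)"] tpos
      by (auto simp: bij_betw_def)
  qed
  have eP: "e ((m - 1) div t) \<in> P" if "m \<in> {1..n}" for m
    using e divlt[OF that] by (auto simp: bij_betw_def)
  have psiX: "psi m \<in> GG" if "m \<in> {1..n}" for m
    using psi_in[OF that] eP[OF that] part by blast
  have inj: "inj_on psi {1..n}"
  proof (rule inj_onI)
    fix m m' assume m: "m \<in> {1..n}" and m': "m' \<in> {1..n}" and eq: "psi m = psi m'"
    have "e ((m - 1) div t) = e ((m' - 1) div t)"
    proof (rule ccontr)
      assume ne: "e ((m - 1) div t) \<noteq> e ((m' - 1) div t)"
      have "disjnt (e ((m - 1) div t)) (e ((m' - 1) div t))"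
        using pairwiseD[OF disj eP[OF m] eP[OF m'] ne] .
      moreover have "psi m \<in> e ((m' - 1) div t)" using psi_in[OF m'] eq by simp
      ultimately show False using psi_in[OF m] by (simp add: disjnt_iff)
    qed
    then have q: "(m - 1) div t = (m' - 1) div t"
      using e divlt[OF m] divlt[OF m'] by (auto simp: bij_betw_def inj_on_def)
    then have "f (e ((m - 1) div t)) ((m - 1) mod t) = f (e ((m - 1) div t)) ((m' - 1) mod t)"
      using eq unfolding psi_def by simp
    then have "(m - 1) mod t = (m' - 1) mod t"
      using f[OF eP[OF m]] tpos by (auto simp: bij_betw_def inj_on_def)
    moreover have "m - 1 = (m - 1) div t * t + (m - 1) mod t" by simp
    moreover have "m' - 1 = (m' - 1) div t * t + (m' - 1) mod t" by simp
    ultimately have "m - 1 = m' - 1" using q by simp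
    then show "m = m'" using m m' by auto
  qed
  have cardX: "card GG = n" using bij by (simp add: bij_betw_same_card[symmetric])
  have psibij: "bij_betw psi {1..n} GG"
  proof -
    have "psi ` {1..n} \<subseteq> GG" using psiX by blast
    moreover have "card (psi ` {1..n}) = card GG" using card_image[OF inj] cardX by simp
    ultimately have "psi ` {1..n} = GG" using fin by (simp add: card_subset_eq)
    then show ?thesis using inj by (simp add: bij_betw_def)
  qed
  define tau where "tau m = (if m \<in> {1..n} then inv_into {1..n} phi (psi m) else m)" for m
  have "bij_betw (inv_into {1..n} phi \<circ> psi) {1..n} {1..n}"
    using bij_betw_trans[OF psibij bij_betw_inv_into[OF bij]] .
  then have "bij_betw tau {1..n} {1..n}"
    by (rule bij_betw_cong[THEN iffD1, rotated]) (simp add: tau_def)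
  moreover have "\<And>x. x \<notin> {1..n} \<Longrightarrow> tau x = x" unfolding tau_def by auto
  ultimately have tperm: "tau permutes {1..n}" by (rule bij_imp_permutes)
  define sig where "sig = Hilbert_Choice.inv tau"
  have sperm: "sig permutes {1..n}" using permutes_inv[OF tperm] sig_def by simp
  have invs: "Hilbert_Choice.inv sig = tau" using permutes_inv_inv[OF tperm] sig_def by simp
  have pv: "perm_vec sig v = (\<lambda>j. v (tau j))" for v :: "nat \<Rightarrow> 'a"
    by (simp add: perm_vec_def invs)
  define D where "D = perm_vec sig ` C"
  have lD: "linear_code n D"
    unfolding linear_code_def
  proof (intro conjI ballI allI)
    show "D \<subseteq> vecs n"
    proof
      fix w assume "w \<in> D"
      then obtain v where v: "v \<in> C" "w = perm_vec sig v" unfolding D_def by blast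
      then have "v \<in> vecs n" using lin by (auto simp: linear_code_def)
      then show "w \<in> vecs n" using v by (auto simp: pv vecs_def tau_def)
    qed
    show "(\<lambda>_. 0) \<in> D" unfolding D_def
      using lin by (intro image_eqI[of _ _ "\<lambda>_. 0"]) (auto simp: pv linear_code_def)
  next
    fix x y assume "x \<in> D" "y \<in> D"
    then obtain a b where "a \<in> C" "b \<in> C" "x = perm_vec sig a" "y = perm_vec sig b"
      unfolding D_def by blast
    then show "(\<lambda>i. x i + y i) \<in> D" unfolding D_def
      using lin by (intro image_eqI[of _ _ "\<lambda>i. a i + b i"]) (auto simp: pv linear_code_def)
  next
    fix c x assume "x \<in> D"
    then obtain a where "a \<in> C" "x = perm_vec sig a"
      unfolding D_def by blast
    then show "(\<lambda>i. c * x i) \<in> D" unfolding D_def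
      using lin by (intro image_eqI[of _ _ "\<lambda>i. c * a i"]) (auto simp: pv linear_code_def)
  qed
  have "D \<subseteq> rep_sum s t"
  proof
    fix w assume "w \<in> D"
    then obtain v where v: "v \<in> C" "w = perm_vec sig v" unfolding D_def by blast
    have wv: "w \<in> vecs n" using lD \<open>w \<in> D\<close> by (auto simp: linear_code_def)
    have blk: "w (i * t + j) = w (i * t + k)" if i: "i < s" and j: "j \<in> {1..t}" and k: "k \<in> {1..t}" for i j k
    proof -
      have jn: "i * t + j \<in> {1..n}" and kn: "i * t + k \<in> {1..n}"
        using a2[OF j i] a2[OF k i] st s_def by auto
      have m1: "psi (i * t + j) \<in> e i" "psi (i * t + k) \<in> e i"
        using psi_in[OF jn] psi_in[OF kn] a1[OF j tpos, of i] a1[OF k tpos, of i] by simp_all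
      have "e i \<in> P" using e i by (auto simp: bij_betw_def)
      then have eq: "v (inv_into {1..n} phi (psi (i * t + j))) = v (inv_into {1..n} phi (psi (i * t + k)))"
        using const v(1) m1 by blast
      have "w (i * t + j) = v (inv_into {1..n} phi (psi (i * t + j)))"
        using jn by (simp add: v(2) pv tau_def)
      moreover have "w (i * t + k) = v (inv_into {1..n} phi (psi (i * t + k)))"
        using kn by (simp add: v(2) pv tau_def)
      ultimately show ?thesis using eq by simp
    qed
    have "w \<in> vecs (s * t)" using wv st s_def by simp
    then show "w \<in> rep_sum s t" unfolding rep_sum_def using blk by blast
  qed
  moreover have "perm_equiv n C D" unfolding perm_equiv_def D_def using sperm by blast
  ultimately show ?thesis using lD s_def by blast
qed



lemma (in group) aux1: "h \<in> carrier G \<Longrightarrow> z \<in> carrier G \<Longrightarrow> h \<otimes> (inv h \<otimes> z) = z"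
  by (simp add: m_assoc[symmetric])

lemma (in group) aux2: "k \<in> carrier G \<Longrightarrow> h \<in> carrier G \<Longrightarrow>
    (k \<otimes> h) \<otimes> inv (inv h \<otimes> k \<otimes> inv (inv h)) = h"
  by (simp add: inv_mult_group m_assoc aux1)

lemma gm_left:
  assumes "group H" "u \<in> carrier H" "g \<in> carrier H" "finite (carrier H)"
  shows "ga_mult H (ga_basis u) x g = x (inv\<^bsub>H\<^esub> u \<otimes>\<^bsub>H\<^esub> g)"
proof -
  have "ga_mult H (ga_basis u) x g = (\<Sum>h\<in>carrier H. (if h = u then x (inv\<^bsub>H\<^esub> h \<otimes>\<^bsub>H\<^esub> g) else 0))"
    unfolding ga_mult_def ga_basis_def using assms(3) by (simp, intro sum.cong refl) simp
  also have "\<dots> = x (inv\<^bsub>H\<^esub> u \<otimes>\<^bsub>H\<^esub> g)" using assms by (simp add: sum.delta')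
  finally show ?thesis .
qed

lemma gm_right:
  assumes "group H" "u \<in> carrier H" "g \<in> carrier H" "finite (carrier H)"
  shows "ga_mult H x (ga_basis u) g = x (g \<otimes>\<^bsub>H\<^esub> inv\<^bsub>H\<^esub> u)"
proof -
  have "ga_mult H x (ga_basis u) g = (\<Sum>h\<in>carrier H. (if h = g \<otimes>\<^bsub>H\<^esub> inv\<^bsub>H\<^esub> u then x h else 0))"
    unfolding ga_mult_def ga_basis_def using assms(3)
  proof (simp, intro sum.cong refl)
    fix h assume h: "h \<in> carrier H"
    have "(inv\<^bsub>H\<^esub> h \<otimes>\<^bsub>H\<^esub> g = u) = (h = g \<otimes>\<^bsub>H\<^esub> inv\<^bsub>H\<^esub> u)"
      using h assms(1,2,3) by (metis group.inv_closed group.inv_inv group.inv_solve_left group.inv_solve_right monoid.m_closed group.is_monoid)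
    then show "x h * (if inv\<^bsub>H\<^esub> h \<otimes>\<^bsub>H\<^esub> g = u then 1 else 0) = (if h = g \<otimes>\<^bsub>H\<^esub> inv\<^bsub>H\<^esub> u then x h else 0)"
      by simp
  qed
  also have "\<dots> = x (g \<otimes>\<^bsub>H\<^esub> inv\<^bsub>H\<^esub> u)" using assms by (simp add: sum.delta' group.inv_closed monoid.m_closed group.is_monoid)
  finally show ?thesis .
qed

theorem corollary2:
  fixes C :: "(nat \<Rightarrow> 'a::{field,finite}) set" and n :: nat and G :: "(nat \<Rightarrow> nat) set"
  assumes "n \<ge> 1"
    and "linear_code n C"
    and "abelian_group_code n C"
    and "regular_subgroup n G"
    and "generate (sym_group n) (G \<union> centralizer_Sn n G) \<subseteq> PAut n C"
    and "\<exists>I. two_sided_ideal ((sym_group n)\<lparr>carrier := G\<rparr>) I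
             \<and> perm_equiv_ideal n C ((sym_group n)\<lparr>carrier := G\<rparr>) I
             \<and> (acts_trivially_left ((sym_group n)\<lparr>carrier := G\<rparr>) (derived (sym_group n) G) I
                \<or> acts_trivially_right ((sym_group n)\<lparr>carrier := G\<rparr>) (derived (sym_group n) G) I)"
    and "derived (sym_group n) G \<noteq> {id}"
  shows "\<exists>s t. s > 1 \<and> t > 1 \<and> s * t = n \<and>
           (\<exists>D. linear_code n D \<and> D \<subseteq> rep_sum s t \<and> perm_equiv n C D)"
proof -
  define H where "H = (sym_group n)\<lparr>carrier := G\<rparr>"
  have SG: "group (sym_group n)" by (rule sym_group_is_group)
  have subG: "subgroup G (sym_group n)" using assms(4) by (simp add: regular_subgroup_def)
  have grpH: "group H" unfolding H_def using subgroup.subgroup_is_group[OF subG SG] .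
  have cH: "carrier H = G" "monoid.mult H = (\<circ>)" "one H = id"
    by (simp_all add: H_def sym_group_def)
  have cardG: "card G = n" using assms(4) by (simp add: regular_subgroup_def)
  have finG: "finite G" using cardG assms(1) card_ge_0_finite by force
  define U where "U = derived (sym_group n) G"
  have UH: "U = derived H (carrier H)"
    unfolding U_def H_def using group.derived_consistent[OF SG order.refl subG] by simp
  have Unorm: "U \<lhd> H" using group.derived_self_is_normal[OF grpH] UH by simp
  have Usub: "subgroup U H" using normal_imp_subgroup[OF Unorm] .
  from assms(6) obtain I where I: "two_sided_ideal H I" "perm_equiv_ideal n C H I"
    and triv: "acts_trivially_left H U I \<or> acts_trivially_right H U I"
    unfolding H_def U_def by blast
  from I(2) obtain phi where phi: "bij_betw phi {1..n} G" "lift_map n H phi ` C = I"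
    unfolding perm_equiv_ideal_def cH by blast
  have finH: "finite (carrier H)" using finG cH by simp
  have inv_const: "x (k \<otimes>\<^bsub>H\<^esub> h) = x h" if x: "x \<in> I" and k: "k \<in> U" and h: "h \<in> carrier H" for x k h
  proof -
    have kc: "k \<in> carrier H" using k Usub subgroup.subset by blast
    have khc: "k \<otimes>\<^bsub>H\<^esub> h \<in> carrier H" using kc h grpH by (simp add: group.is_monoid monoid.m_closed)
    show ?thesis using triv
    proof
      assume L: "acts_trivially_left H U I"
      have "ga_mult H (ga_basis k) x = x" using L x k by (simp add: acts_trivially_left_def)
      then have "x (inv\<^bsub>H\<^esub> k \<otimes>\<^bsub>H\<^esub> (k \<otimes>\<^bsub>H\<^esub> h)) = x (k \<otimes>\<^bsub>H\<^esub> h)"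
        using gm_left[OF grpH kc khc finH, of x] by simp
      moreover have "inv\<^bsub>H\<^esub> k \<otimes>\<^bsub>H\<^esub> (k \<otimes>\<^bsub>H\<^esub> h) = h"
        using grpH kc h by (simp add: monoid.m_assoc[OF group.is_monoid, symmetric] group.l_inv group.inv_closed monoid.l_one[OF group.is_monoid])
      ultimately show ?thesis by simp
    next
      assume R: "acts_trivially_right H U I"
      define u where "u = inv\<^bsub>H\<^esub> h \<otimes>\<^bsub>H\<^esub> k \<otimes>\<^bsub>H\<^esub> inv\<^bsub>H\<^esub> (inv\<^bsub>H\<^esub> h)"
      have nn: "\<forall>y\<in>carrier H. \<forall>z\<in>U. y \<otimes>\<^bsub>H\<^esub> z \<otimes>\<^bsub>H\<^esub> inv\<^bsub>H\<^esub> y \<in> U"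
        using Unorm group.normal_inv_iff[OF grpH] by blast
      have uU: "u \<in> U" using nn k group.inv_closed[OF grpH h] unfolding u_def by blast
      have uc: "u \<in> carrier H" using uU Usub subgroup.subset by blast
      have "ga_mult H x (ga_basis u) = x" using R x uU by (simp add: acts_trivially_right_def)
      then have "x ((k \<otimes>\<^bsub>H\<^esub> h) \<otimes>\<^bsub>H\<^esub> inv\<^bsub>H\<^esub> u) = x (k \<otimes>\<^bsub>H\<^esub> h)"
        using gm_right[OF grpH uc khc finH, of x] by simp
      moreover have "(k \<otimes>\<^bsub>H\<^esub> h) \<otimes>\<^bsub>H\<^esub> inv\<^bsub>H\<^esub> u = h"
        using group.aux2[OF grpH kc h] unfolding u_def .
      ultimately show ?thesis by simp
    qed
  qed
  have oneU: "one H \<in> U" using subgroup.one_closed[OF Usub] .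
  have "\<exists>u\<in>U. u \<noteq> one H"
  proof (rule ccontr)
    assume "\<not> (\<exists>u\<in>U. u \<noteq> one H)"
    then have "U = {one H}" using oneU by blast
    then have "U = {id}" using cH(3) by (simp only:)
    then show False using assms(7) unfolding U_def by (simp only:)
  qed
  then obtain u where u: "u \<in> U" "u \<noteq> one H" by blast
  have uc: "u \<in> carrier H" using u Usub subgroup.subset by blast
  define K where "K = generate H {u}"
  have Ksub: "subgroup K H" unfolding K_def using group.generate_is_subgroup[OF grpH] uc by simp
  have KU: "K \<subseteq> U" unfolding K_def using group.generate_subgroup_incl[OF grpH _ Usub] u by simp
  have KG: "K \<subseteq> G" using Ksub subgroup.subset cH by blast
  have finK: "finite K" using KG finG finite_subset by blast
  have "{u, one H} \<subseteq> K" unfolding K_def using generate.incl[of u "{u}" H] generate.one[of H "{u}"] by simp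
  then have "card {u, one H} \<le> card K" using finK card_mono by blast
  then have tgt: "card K > 1" using u(2) by simp
  have KneG: "K \<noteq> G"
  proof
    assume KG: "K = G"
    have "comm_group H"
    proof (rule group.group_comm_groupI[OF grpH])
      fix x y assume xy: "x \<in> carrier H" "y \<in> carrier H"
      have gp: "K = {u [^]\<^bsub>H\<^esub> (k::int) | k. k \<in> UNIV}"
        using group.generate_pow[OF grpH uc] K_def by simp
      obtain i j :: int where "x = u [^]\<^bsub>H\<^esub> i" "y = u [^]\<^bsub>H\<^esub> j"
        using xy unfolding cH(1) KG[symmetric] gp by blast
      then show "x \<otimes>\<^bsub>H\<^esub> y = y \<otimes>\<^bsub>H\<^esub> x"
        using group.int_pow_mult[OF grpH uc, of i j] group.int_pow_mult[OF grpH uc, of j i]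
        by (simp add: add.commute)
    qed
    then have "U = {one H}" using comm_group.derived_eq_singleton[of H "carrier H"] UH by simp
    then have "U = {id}" using cH(3) by (simp only:)
    then show False using assms(7) unfolding U_def by (simp only:)
  qed
  have tlt: "card K < n" using KG KneG finG cardG by (metis psubset_card_mono psubsetI)
  define P where "P = rcosets\<^bsub>H\<^esub> K"
  have lag: "card P * card K = n"
    unfolding P_def using group.lagrange[OF grpH Ksub] cardG cH by (simp add: order_def)
  have sgt: "card P > 1"
  proof (rule ccontr)
    assume "\<not> card P > 1"
    then have "card P * card K \<le> card K" by (cases "card P") auto
    then show False using lag tlt by simp
  qed
  have "\<exists>D. linear_code n D \<and> D \<subseteq> rep_sum (card P) (card K) \<and> perm_equiv n C D"
  proof (rule core[OF phi(1) finG _ _ _ lag _ assms(2)])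
    show "\<Union>P = G" unfolding P_def using group.rcosets_part_G[OF grpH Ksub] cH by simp
    show "pairwise disjnt P" unfolding P_def using group.rcos_disjoint[OF grpH Ksub] .
    show "\<forall>c\<in>P. card c = card K" unfolding P_def
      using group.card_rcosets_equal[OF grpH] KG cH by simp
    show "card K > 0" using tgt by simp
    show "\<forall>v\<in>C. \<forall>c\<in>P. \<forall>g\<in>c. \<forall>g'\<in>c. v (inv_into {1..n} phi g) = v (inv_into {1..n} phi g')"
    proof (intro ballI)
      fix v c g g' assume v: "v \<in> C" and c: "c \<in> P" and g: "g \<in> c" and g': "g' \<in> c"
      obtain a where a: "a \<in> G" "c = K #>\<^bsub>H\<^esub> a" using c unfolding P_def RCOSETS_def cH by blast
      define x where "x = lift_map n H phi v"
      have xI: "x \<in> I" using phi(2) v x_def by blast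
      have xv: "x y = v (inv_into {1..n} phi y)" if "y \<in> G" for y
        using that cH by (simp add: x_def lift_map_def)
      have cst: "x y = x a" if yc: "y \<in> c" for y
      proof -
        obtain k where k: "k \<in> K" "y = k \<otimes>\<^bsub>H\<^esub> a" using yc a(2) unfolding r_coset_def by blast
        then show ?thesis using inv_const[OF xI _ ] KU a(1) cH by blast
      qed
      have "g \<in> G" "g' \<in> G" using g g' c \<open>\<Union>P = G\<close> by blast+
      then show "v (inv_into {1..n} phi g) = v (inv_into {1..n} phi g')"
        using xv cst[OF g] cst[OF g'] by metis
    qed
  qed
  then show ?thesis using sgt tgt lag by blast
qed


end
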